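(* Let $\omega>0$, $\bar r>0$, $\bar v>0$ and $T>0$ be such that $e^{AT}\begin{bmatrix}-\bar r\\ \bar v\end{bmatrix}=\begin{bmatrix}\bar r\\ \bar v\end{bmatrix}$, where $A=\begin{bmatrix}0&1\\ \omega^2&0\end{bmatrix}$. Consider the hybrid system with state $(x,\tau)$, $x=(x_p,x_v)\in\mathbb R^2$, $\tau\in\mathbb R$, input $u\in\mathbb R$ and $B=\begin{bmatrix}0\\-\omega^2\end{bmatrix}$: flow: $\dot x=Ax+Bu$, $\dot\tau=1$, for $(x,\tau)\in\mathcal C\times[-T,2T]$; jump: $x^+=x+\begin{bmatrix}-2\bar r\\0\end{bmatrix}$, $\tau^+=\tau-T$, for $(x,\tau)\in\mathcal D\times[-T,2T]$, where $\mathcal C=[-\bar r,\bar r]\times\mathbb R$ and $\mathcal D=\{x\in\mathcal C: x_p=\bar r\}$. Define $x_r(\tau)=e^{A\tau}\begin{bmatrix}-\bar r\\ \bar v\end{bmatrix}$, the error $\varepsilon=(\varepsilon_p,\varepsilon_v)=x-x_r(\tau)$, and $\tau_\varepsilon=T-\tau$. Then $\bar v/\omega-\bar r>0$, and whenever a solution of this hybrid system is at a point $(x,\tau)$ with $x\in\mathcal D$, it holds that $$\tau_\varepsilon=\frac1\omega\ln\big(\eta(\varepsilon_p)\big),\qquad \eta(\varepsilon_p):=\frac{\varepsilon_p-\bar r+\sqrt{\varepsilon_p^2-2\bar r\varepsilon_p+(\bar v/\omega)^2}}{\bar v/\omega-\bar r}.$$ Moreover, $\varepsilon_p\mapsto\frac1\omega\ln(\eta(\varepsilon_p))$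 is an extended class $\mathcal K_\infty$ function on $\mathbb R$; equivalently, $\eta(0)=1$, $\eta$ is strictly increasing, $\lim_{\varepsilon_p\to+\infty}\eta(\varepsilon_p)=+\infty$ and $\lim_{\varepsilon_p\to-\infty}\eta(\varepsilon_p)=0$.
   Context: An extended class $\mathcal K_\infty$ function is a function $\mathbb R\to\mathbb R$ that is continuous, strictly increasing, zero at zero, and unbounded both above and below (tends to $+\infty$ at $+\infty$ and to $-\infty$ at $-\infty$). Solutions of the hybrid system are understood in the standard hybrid-time-domain sense (Goebel–Sanfelice–Teel). *)

theory Defs
  imports "HOL-Analysis.Analysis"
begin

fun matpow :: "real^'n^'n \<Rightarrow> nat \<Rightarrow> real^'n^'n" where
  "matpow M 0 = mat 1"
| "matpow M (Suc k) = M ** matpow M k"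

definition mexp :: "real^'n^'n \<Rightarrow> real^'n^'n" where
  "mexp M = (\<Sum>k. (1 / fact k) *\<^sub>R matpow M k)"

text \<open>The matrix A = [[0,1],[omega^2,0]] (given by rows) and B = [0; -omega^2].\<close>
definition Amat :: "real \<Rightarrow> real^2^2" where
  "Amat \<omega> = vector [vector [0, 1], vector [\<omega>^2, 0]]"

definition Bvec :: "real \<Rightarrow> real^2" where
  "Bvec \<omega> = vector [0, - (\<omega>^2)]"

definition Cset :: "real \<Rightarrow> (real^2) set" where
  "Cset rb = {x. x$1 \<in> {-rb..rb}}"

definition Dset :: "real \<Rightarrow> (real^2) set" where
  "Dset rb = {x. x \<in> Cset rb \<and> x$1 = rb}"

definition xref :: "real \<Rightarrow> real \<Rightarrow> real \<Rightarrow> real \<Rightarrow> real^2" where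
  "xref \<omega> rb vb \<tau> = mexp (\<tau> *\<^sub>R Amat \<omega>) *v vector [- rb, vb]"

definition eta :: "real \<Rightarrow> real \<Rightarrow> real \<Rightarrow> real \<Rightarrow> real" where
  "eta \<omega> rb vb e =
     (e - rb + sqrt (e^2 - 2 * rb * e + (vb / \<omega>)^2)) / (vb / \<omega> - rb)"

definition ext_class_Kinf :: "(real \<Rightarrow> real) \<Rightarrow> bool" where
  "ext_class_Kinf f \<longleftrightarrow> continuous_on UNIV f \<and> strict_mono f \<and> f 0 = 0
     \<and> filterlim f at_top at_top \<and> filterlim f at_bot at_bot"

end

theory Submission
  imports Defs "HOL-Real_Asymp.Real_Asymp"
begin


lemma Asq: "Amat w ** Amat w = (w^2) *\<^sub>R mat 1"
  by (simp add: vec_eq_iff forall_2 matrix_matrix_mult_def sum_2 Amat_def mat_def)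

lemma matpow_form:
  assumes "w \<noteq> 0"
  shows "matpow (t *\<^sub>R Amat w) k =
     (if even k then (t*w)^k else 0) *\<^sub>R mat 1 + (if even k then 0 else (t*w)^k / w) *\<^sub>R Amat w"
proof (induction k)
  case 0
  then show ?case by simp
next
  case (Suc k)
  have "matpow (t *\<^sub>R Amat w) (Suc k) = (t *\<^sub>R Amat w) ** matpow (t *\<^sub>R Amat w) k" by simp
  also have "\<dots> = (t *\<^sub>R Amat w) ** ((if even k then (t*w)^k else 0) *\<^sub>R mat 1 + (if even k then 0 else (t*w)^k / w) *\<^sub>R Amat w)"
    using Suc by simp
  also have "\<dots> = (t * (if even k then (t*w)^k else 0)) *\<^sub>R Amat w + (t * (if even k then 0 else (t*w)^k / w) * w^2) *\<^sub>R mat 1"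
    by (simp add: matrix_add_ldistrib matrix_scalar_ac scalar_matrix_assoc[symmetric] Asq)
  finally show ?case using assms
    by (cases "even k") (auto simp: power2_eq_square field_simps)
qed

lemma mexp_form:
  assumes "w \<noteq> 0"
  shows "mexp (t *\<^sub>R Amat w) = cosh (t*w) *\<^sub>R mat 1 + (sinh (t*w) / w) *\<^sub>R Amat w"
proof -
  have s1: "(\<lambda>k. (if even k then (t*w) ^ k /\<^sub>R fact k else 0) *\<^sub>R (mat 1 :: real^2^2)) sums (cosh (t*w) *\<^sub>R mat 1)"
    by (intro sums_scaleR_left cosh_converges)
  have s2: "(\<lambda>k. ((if even k then 0 else (t*w) ^ k /\<^sub>R fact k) / w) *\<^sub>R Amat w) sums ((sinh (t*w) / w) *\<^sub>R Amat w)"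
    by (intro sums_scaleR_left sums_divide sinh_converges)
  have eq: "(\<lambda>k. (1 / fact k) *\<^sub>R matpow (t *\<^sub>R Amat w) k) = (\<lambda>k. (if even k then (t*w) ^ k /\<^sub>R fact k else 0) *\<^sub>R (mat 1 :: real^2^2) + ((if even k then 0 else (t*w) ^ k /\<^sub>R fact k) / w) *\<^sub>R Amat w)"
  proof (rule ext)
    fix k
    have h1: "(1 / fact k) * (if even k then (t*w)^k else 0) = (if even k then (t*w)^k /\<^sub>R fact k else 0)"
      by (cases "even k") (simp_all add: field_simps)
    have h2: "(1 / fact k) * (if even k then 0 else (t*w)^k / w) = (if even k then 0 else (t*w) ^ k /\<^sub>R fact k) / w"
      by (cases "even k") (simp_all add: field_simps)
    have e: "(1 / fact k) *\<^sub>R matpow (t *\<^sub>R Amat w) k = ((1 / fact k) * (if even k then (t*w)^k else 0)) *\<^sub>R (mat 1 :: real^2^2) + ((1 / fact k) * (if even k then 0 else (t*w)^k / w)) *\<^sub>R Amat w"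
      by (simp add: matpow_form[OF assms] scaleR_add_right)
    show "(1 / fact k) *\<^sub>R matpow (t *\<^sub>R Amat w) k = (if even k then (t*w) ^ k /\<^sub>R fact k else 0) *\<^sub>R (mat 1 :: real^2^2) + ((if even k then 0 else (t*w) ^ k /\<^sub>R fact k) / w) *\<^sub>R Amat w"
      by (simp only: e h1 h2)
  qed
  have "(\<lambda>k. (1 / fact k) *\<^sub>R matpow (t *\<^sub>R Amat w) k) sums (cosh (t*w) *\<^sub>R mat 1 + (sinh (t*w) / w) *\<^sub>R Amat w)"
    unfolding eq by (rule sums_add[OF s1 s2])
  then show ?thesis unfolding mexp_def by (rule sums_unique[symmetric])
qed

lemma mexp_vec:
  assumes "w \<noteq> 0"
  shows "mexp (t *\<^sub>R Amat w) *v vector [a, b] = vector [a * cosh (t*w) + b * sinh (t*w) / w, b * cosh (t*w) + a * w * sinh (t*w)]"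
  unfolding mexp_form[OF assms]
  by (simp add: vec_eq_iff forall_2 matrix_vector_mult_def sum_2 Amat_def mat_def power2_eq_square)


lemma sqrt_gt_abs:
  fixes u K :: real assumes "K > 0"
  shows "sqrt (u^2 + K) > \<bar>u\<bar>"
proof -
  have "sqrt (u^2) < sqrt (u^2 + K)" using assms by (intro real_sqrt_less_mono) simp
  then show ?thesis by simp
qed

locale etactx =
  fixes w rb vb :: real
  assumes w_pos: "w > 0" and rb_pos: "rb > 0" and crb: "vb / w > rb"
begin

definition "c = vb / w"
definition "S e = sqrt ((e - rb)^2 + (c^2 - rb^2))"

lemma c_gt: "c > rb" using crb by (simp add: c_def)
lemma K_pos: "c^2 - rb^2 > 0"
  using c_gt rb_pos by (smt (verit) power_strict_mono zero_less_numeral)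

lemma eta_S: "eta w rb vb e = (e - rb + S e) / (c - rb)"
  unfolding eta_def S_def c_def by (simp add: power2_eq_square algebra_simps)

lemma S_gt: "S e > \<bar>e - rb\<bar>" unfolding S_def by (rule sqrt_gt_abs[OF K_pos])

lemma S_sq: "(S e)^2 = (e - rb)^2 + (c^2 - rb^2)"
  unfolding S_def using K_pos by (simp add: add_nonneg_pos)

lemma eta_pos: "eta w rb vb e > 0"
  unfolding eta_S using S_gt[of e] c_gt by (intro divide_pos_pos) auto

lemma eta_alt: "eta w rb vb e = (c + rb) / (S e - (e - rb))"
proof -
  have p: "S e - (e - rb) > 0" using S_gt[of e] by auto
  have "(e - rb + S e) * (S e - (e - rb)) = (c - rb) * (c + rb)"
    using S_sq[of e] by (simp add: power2_eq_square algebra_simps)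
  then show ?thesis unfolding eta_S using p c_gt rb_pos by (simp add: field_simps)
qed

lemma eta_inv: "rb + ((c - rb) * eta w rb vb e - (c + rb) / eta w rb vb e) / 2 = e"
proof -
  have p: "S e - (e - rb) > 0" using S_gt[of e] by auto
  have a: "(c - rb) * eta w rb vb e = e - rb + S e" unfolding eta_S using c_gt by simp
  have b: "(c + rb) / eta w rb vb e = S e - (e - rb)" unfolding eta_alt using p c_gt rb_pos by simp
  show ?thesis unfolding a b by (simp add: field_simps)
qed

lemma phi_mono: "0 < y1 \<Longrightarrow> y1 \<le> y2 \<Longrightarrow>
   rb + ((c - rb) * y1 - (c + rb) / y1) / 2 \<le> rb + ((c - rb) * y2 - (c + rb) / y2) / 2"
proof -
  assume "0 < y1" "y1 \<le> y2"
  then have "(c + rb) / y2 \<le> (c + rb) / y1" using c_gt rb_pos by (intro divide_left_mono) auto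
  moreover have "(c - rb) * y1 \<le> (c - rb) * y2" using c_gt \<open>y1 \<le> y2\<close> by simp
  ultimately have "((c - rb) * y1 - (c + rb) / y1) \<le> ((c - rb) * y2 - (c + rb) / y2)" by linarith
  from divide_right_mono[OF this, of 2] show ?thesis by linarith
qed

lemma eta_strict_mono: "strict_mono (eta w rb vb)"
proof (rule strict_monoI)
  fix a b :: real assume "a < b"
  show "eta w rb vb a < eta w rb vb b"
  proof (rule ccontr)
    assume "\<not> ?thesis"
    then have "eta w rb vb b \<le> eta w rb vb a" by simp
    from phi_mono[OF eta_pos this] have "b \<le> a" unfolding eta_inv .
    with \<open>a < b\<close> show False by simp
  qed
qed

lemma eta_0: "eta w rb vb 0 = 1"
proof -
  have "S 0 = c" unfolding S_def using c_gt rb_pos by (simp add: power2_eq_square)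
  then show ?thesis unfolding eta_S using c_gt by simp
qed

lemma eta_top: "filterlim (eta w rb vb) at_top at_top"
proof (rule filterlim_at_top_mono)
  show "LIM e at_top. 2 * (e - rb) / (c - rb) :> at_top" using c_gt by real_asymp
  show "\<forall>\<^sub>F e in at_top. 2 * (e - rb) / (c - rb) \<le> eta w rb vb e"
    unfolding eta_S using S_gt c_gt by (intro always_eventually allI divide_right_mono) (auto, smt (verit) S_gt)
qed

lemma eta_bot: "((eta w rb vb) \<longlongrightarrow> 0) at_bot"
proof (rule tendsto_sandwich)
  show "\<forall>\<^sub>F e in at_bot. 0 \<le> eta w rb vb e" by (intro always_eventually allI) (simp add: eta_pos less_imp_le)
  show "((\<lambda>_. 0::real) \<longlongrightarrow> 0) at_bot" by simp
  show "((\<lambda>e. (c + rb) / (rb - e)) \<longlongrightarrow> 0) at_bot" by real_asymp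
  have "eta w rb vb e \<le> (c + rb) / (rb - e)" if "e < rb" for e
    unfolding eta_alt using that c_gt rb_pos S_gt[of e]
    by (intro divide_left_mono mult_pos_pos) auto
  then show "\<forall>\<^sub>F e in at_bot. eta w rb vb e \<le> (c + rb) / (rb - e)"
    unfolding eventually_at_bot_linorder by (intro exI[of _ "rb - 1"]) auto
qed

lemma eta_cont: "continuous_on UNIV (eta w rb vb)"
  unfolding eta_def using crb by (intro continuous_intros) auto

lemma g_Kinf: "ext_class_Kinf (\<lambda>e. (1 / w) * ln (eta w rb vb e))"
  unfolding ext_class_Kinf_def
proof (intro conjI)
  show "continuous_on UNIV (\<lambda>e. 1 / w * ln (eta w rb vb e))"
    using eta_pos by (intro continuous_intros eta_cont) (auto simp: less_imp_neq[symmetric])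
  show "strict_mono (\<lambda>e. 1 / w * ln (eta w rb vb e))"
  proof (rule strict_monoI)
    fix a b :: real assume "a < b"
    then have "eta w rb vb a < eta w rb vb b" using eta_strict_mono by (simp add: strict_mono_def)
    then have "ln (eta w rb vb a) < ln (eta w rb vb b)" using eta_pos by simp
    then show "1 / w * ln (eta w rb vb a) < 1 / w * ln (eta w rb vb b)" using w_pos by (simp add: divide_strict_right_mono)
  qed
  show "1 / w * ln (eta w rb vb 0) = 0" by (simp add: eta_0)
  show "LIM x at_top. 1 / w * ln (eta w rb vb x) :> at_top"
    using w_pos by (intro filterlim_tendsto_pos_mult_at_top[OF tendsto_const] filterlim_compose[OF ln_at_top eta_top]) auto
  have r: "filterlim (eta w rb vb) (at_right 0) at_bot"
    using eta_bot eta_pos by (intro tendsto_imp_filterlim_at_right) auto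
  show "LIM x at_bot. 1 / w * ln (eta w rb vb x) :> at_bot"
    using w_pos by (intro filterlim_tendsto_pos_mult_at_bot[OF tendsto_const] filterlim_compose[OF ln_at_0 r]) auto
qed

end

theorem proposition1:
  fixes \<omega> rb vb T :: real
  assumes "\<omega> > 0" and "rb > 0" and "vb > 0" and "T > 0"
    and "mexp (T *\<^sub>R Amat \<omega>) *v vector [- rb, vb] = vector [rb, vb]"
  shows "vb / \<omega> - rb > 0
    \<and> (\<forall>x \<tau>. x \<in> Dset rb \<and> \<tau> \<in> {-T..2*T} \<longrightarrow>
         (let \<epsilon> = x - xref \<omega> rb vb \<tau> in
            T - \<tau> = (1 / \<omega>) * ln (eta \<omega> rb vb (\<epsilon>$1))))
    \<and> ext_class_Kinf (\<lambda>e. (1 / \<omega>) * ln (eta \<omega> rb vb e))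
    \<and> eta \<omega> rb vb 0 = 1
    \<and> strict_mono (eta \<omega> rb vb)
    \<and> filterlim (eta \<omega> rb vb) at_top at_top
    \<and> ((eta \<omega> rb vb) \<longlongrightarrow> 0) at_bot"
proof -
  note w = assms(1) and rbp = assms(2) and vbp = assms(3) and Tp = assms(4)
  have wne: "\<omega> \<noteq> 0" using w by simp
  have hv: "vector [- rb * cosh (T*\<omega>) + vb * sinh (T*\<omega>) / \<omega>, vb * cosh (T*\<omega>) + - rb * \<omega> * sinh (T*\<omega>)] = (vector [rb, vb] :: real^2)"
    using assms(5) unfolding mexp_vec[OF wne] .
  have h2: "vb * cosh (T*\<omega>) - rb * \<omega> * sinh (T*\<omega>) = vb"
    using arg_cong[OF hv, of "\<lambda>v. v$2"] by simp
  define E where "E = exp (T*\<omega>)"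
  have E1: "E > 1" unfolding E_def using w Tp by simp
  have ch: "cosh (T*\<omega>) = (E + 1/E)/2" unfolding E_def cosh_def by (simp add: exp_minus field_simps)
  have sh: "sinh (T*\<omega>) = (E - 1/E)/2" unfolding E_def sinh_def by (simp add: exp_minus field_simps)
  have chE: "E*E + 1 = 2*E * cosh (T*\<omega>)" unfolding ch using E1 by (simp add: field_simps)
  have shE: "E*E - 1 = 2*E * sinh (T*\<omega>)" unfolding sh using E1 by (simp add: field_simps)
  have "vb * (E*E + 1) - rb*\<omega>*(E*E - 1) = 2*E * (vb * cosh (T*\<omega>) - rb * \<omega> * sinh (T*\<omega>))"
    unfolding chE shE by (simp add: algebra_simps)
  also have "\<dots> = 2*E * vb" using h2 by simp
  finally have "vb * (E - 1)^2 = rb * \<omega> * (E - 1) * (E + 1)"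
    by (simp add: power2_eq_square algebra_simps)
  then have key0: "vb * (E - 1) = rb * \<omega> * (E + 1)"
    using E1 by (simp add: power2_eq_square)
  define c where c0: "c = vb / \<omega>"
  have key: "c * (E - 1) = rb * (E + 1)" unfolding c0 using key0 w by (simp add: field_simps)
  have cgt: "c > rb"
  proof -
    have "c * (E - 1) > rb * (E - 1)" using key rbp by simp
    then show ?thesis using E1 by simp
  qed
  have keyE: "E * (c - rb) = c + rb" using key by (simp add: algebra_simps)
  have crb: "vb / \<omega> > rb" using cgt c0 by simp
  interpret etactx \<omega> rb vb using w rbp crb by unfold_locales
  have cc: "etactx.c \<omega> vb = c" by (simp add: c0 etactx.c_def[OF etactx_axioms])
  have part2: "\<forall>x \<tau>. x \<in> Dset rb \<and> \<tau> \<in> {-T..2*T} \<longrightarrow>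
         (let \<epsilon> = x - xref \<omega> rb vb \<tau> in
            T - \<tau> = (1 / \<omega>) * ln (eta \<omega> rb vb (\<epsilon>$1)))"
  proof (intro allI impI)
    fix x :: "real^2" and \<tau> :: real
    assume "x \<in> Dset rb \<and> \<tau> \<in> {-T..2*T}"
    then have x1: "x$1 = rb" by (simp add: Dset_def)
    define s where "s = exp (\<tau>*\<omega>)"
    have s0: "s > 0" unfolding s_def by simp
    have chs: "cosh (\<tau>*\<omega>) = (s + 1/s)/2" unfolding s_def cosh_def by (simp add: exp_minus field_simps)
    have shs: "sinh (\<tau>*\<omega>) = (s - 1/s)/2" unfolding s_def sinh_def by (simp add: exp_minus field_simps)
    define e where "e = (x - xref \<omega> rb vb \<tau>)$1"
    have e_eq: "e = rb + rb * cosh (\<tau>*\<omega>) - c * sinh (\<tau>*\<omega>)"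
      unfolding e_def xref_def mexp_vec[OF wne] using x1 by (simp add: c0)
    define u where "u = e - rb"
    have u_eq: "u = (rb * (s + 1/s) - c * (s - 1/s)) / 2" unfolding u_def e_eq chs shs by (simp add: field_simps)
    define R where "R = ((c + rb)/s + (c - rb) * s)/2"
    have R0: "R \<ge> 0" unfolding R_def using s0 cgt rbp by (intro divide_nonneg_pos add_nonneg_nonneg) auto
    have uR: "u + R = (c + rb)/s" unfolding u_eq R_def using s0 by (simp add: field_simps)
    have Ru: "R - u = (c - rb) * s" unfolding u_eq R_def using s0 by (simp add: field_simps)
    have Req: "R^2 = u^2 + (c^2 - rb^2)"
    proof -
      have "(R - u) * (R + u) = c^2 - rb^2" unfolding Ru using uR s0
        by (simp add: add.commute power2_eq_square field_simps)
      then show ?thesis by (simp add: power2_eq_square algebra_simps)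
    qed
    have SR: "S e = R" unfolding S_def cc u_def[symmetric] Req[symmetric] using R0 by simp
    have "eta \<omega> rb vb e = (c + rb) / (s * (c - rb))" unfolding eta_S cc SR u_def[symmetric] uR
      by simp
    also have "\<dots> = E / s" unfolding keyE[symmetric] using cgt s0 by simp
    also have "\<dots> = exp (T*\<omega> - \<tau>*\<omega>)" unfolding E_def s_def by (simp add: exp_diff)
    finally have "ln (eta \<omega> rb vb e) = T*\<omega> - \<tau>*\<omega>" by simp
    then show "let \<epsilon> = x - xref \<omega> rb vb \<tau> in T - \<tau> = (1 / \<omega>) * ln (eta \<omega> rb vb (\<epsilon>$1))"
      unfolding e_def[symmetric] Let_def using w by (simp add: field_simps)
  qed
  show ?thesis using crb part2 g_Kinf eta_0 eta_strict_mono eta_top eta_bot by simp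
qed

end
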